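(* Let $\mathcal{X}=\mathcal{X}_1\times\cdots\times\mathcal{X}_K$ and let $P_1$ and $P_2$ be the transition kernels of the deterministic-scan Gibbs samplers targeting $\pi_1\in\mathcal{P}(\mathcal{X})$ and $\pi_2\in\mathcal{P}(\mathcal{X})$, respectively. Then for every $M\ge1$ and every $\mu\in\mathcal{N}(\pi_1,M)\cup\mathcal{N}(\pi_2,M)$, \[ \|\mu P_1-\mu P_2\|_{TV}\le 2MK\|\pi_1-\pi_2\|_{TV}. \]
   Context: $\mathcal{P}(\mathcal{X})$ is the set of probability distributions on $\mathcal{X}$; $\|\mu-\nu\|_{TV}=\sup_A|\mu(A)-\nu(A)|$. The deterministic-scan Gibbs sampler targeting $\pi$ is $P=P_{\cdot,1}\cdots P_{\cdot,K}$, where the $i$-th factor resamples coordinate $x_i$ from $\pi(\mathrm{d}x_i\mid\mathbf{x}^{(-i)})$, $\mathbf{x}^{(-i)}=(x_j)_{j\ne i}$, leaving other coordinates unchanged. $\mathcal{N}(\pi,M)=\{\mu\in\mathcal{P}(\mathcal{X}):\mu(A)\le M\pi(A)\ \forall A\}$; $\mu P(A)=\int P(\mathbf{x},A)\mu(\mathrm{d}\mathbf{x})$. *)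

theory Defs
  imports "HOL-Probability.Probability"
begin

text \<open>The product space X = X_0 x ... x X_{K-1} is PiM {..<K} Ms; coordinates are indexed
  by 0..K-1. Points are (extensional) functions nat => 'a.\<close>

abbreviation prodX :: "nat \<Rightarrow> (nat \<Rightarrow> 'a measure) \<Rightarrow> (nat \<Rightarrow> 'a) measure" where
  "prodX K Ms \<equiv> PiM {..<K} Ms"

definition tv_dist :: "'b measure \<Rightarrow> 'b measure \<Rightarrow> real" where
  "tv_dist \<mu> \<nu> = (SUP A \<in> sets \<mu>. \<bar>measure \<mu> A - measure \<nu> A\<bar>)"

definition Nset :: "nat \<Rightarrow> (nat \<Rightarrow> 'a measure) \<Rightarrow> (nat \<Rightarrow> 'a) measure \<Rightarrow> real
    \<Rightarrow> (nat \<Rightarrow> 'a) measure set" where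
  "Nset K Ms \<pi> M = {\<mu>. prob_space \<mu> \<and> sets \<mu> = sets (prodX K Ms) \<and>
      (\<forall>A \<in> sets (prodX K Ms). measure \<mu> A \<le> M * measure \<pi> A)}"

text \<open>Q is a (regular) version of the conditional distribution pi(dx_i | x^(-i)):
  Q is a probability kernel from X^(-i) = PiM ({..<K}-{i}) Ms to X_i, and for every
  measurable B in X^(-i) and E in X_i,
  pi{x. x^(-i) in B, x_i in E} = integral over pi of 1_B(x^(-i)) Q(x^(-i), E).\<close>
definition is_cond_dist :: "nat \<Rightarrow> (nat \<Rightarrow> 'a measure) \<Rightarrow> (nat \<Rightarrow> 'a) measure \<Rightarrow> nat
    \<Rightarrow> ((nat \<Rightarrow> 'a) \<Rightarrow> 'a measure) \<Rightarrow> bool" where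
  "is_cond_dist K Ms \<pi> i Q \<longleftrightarrow>
     Q \<in> PiM ({..<K} - {i}) Ms \<rightarrow>\<^sub>M prob_algebra (Ms i) \<and>
     (\<forall>B \<in> sets (PiM ({..<K} - {i}) Ms). \<forall>E \<in> sets (Ms i).
        emeasure \<pi> {x \<in> space \<pi>. restrict x ({..<K} - {i}) \<in> B \<and> x i \<in> E}
        = (\<integral>\<^sup>+ x. indicator B (restrict x ({..<K} - {i}))
                     * emeasure (Q (restrict x ({..<K} - {i}))) E \<partial>\<pi>))"

definition gibbs_step :: "nat \<Rightarrow> (nat \<Rightarrow> 'a measure) \<Rightarrow> nat \<Rightarrow> ((nat \<Rightarrow> 'a) \<Rightarrow> 'a measure)
    \<Rightarrow> (nat \<Rightarrow> 'a) \<Rightarrow> (nat \<Rightarrow> 'a) measure" where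
  "gibbs_step K Ms i Q x =
     distr (Q (restrict x ({..<K} - {i}))) (prodX K Ms) (\<lambda>y. x(i := y))"

fun gibbs_iter :: "nat \<Rightarrow> (nat \<Rightarrow> 'a measure) \<Rightarrow> (nat \<Rightarrow> (nat \<Rightarrow> 'a) \<Rightarrow> 'a measure) \<Rightarrow> nat
    \<Rightarrow> (nat \<Rightarrow> 'a) measure \<Rightarrow> (nat \<Rightarrow> 'a) measure" where
  "gibbs_iter K Ms Q 0 \<nu> = \<nu>"
| "gibbs_iter K Ms Q (Suc n) \<nu> = bind (gibbs_iter K Ms Q n \<nu>) (gibbs_step K Ms n (Q n))"

definition gibbs_kernel :: "nat \<Rightarrow> (nat \<Rightarrow> 'a measure) \<Rightarrow> (nat \<Rightarrow> (nat \<Rightarrow> 'a) \<Rightarrow> 'a measure)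
    \<Rightarrow> (nat \<Rightarrow> 'a) \<Rightarrow> (nat \<Rightarrow> 'a) measure" where
  "gibbs_kernel K Ms Q x = gibbs_iter K Ms Q K (return (prodX K Ms) x)"

definition apply_kernel :: "'b measure \<Rightarrow> ('b \<Rightarrow> 'b measure) \<Rightarrow> 'b measure" where
  "apply_kernel \<mu> P = bind \<mu> P"

end

theory Submission
  imports Defs
begin


lemma tv_upper:
  assumes "prob_space \<rho>" "prob_space \<rho>'" "A \<in> sets \<rho>"
  shows "\<bar>measure \<rho> A - measure \<rho>' A\<bar> \<le> tv_dist \<rho> \<rho>'"
  unfolding tv_dist_def
proof (rule cSUP_upper[OF assms(3)])
  show "bdd_above ((\<lambda>A. \<bar>measure \<rho> A - measure \<rho>' A\<bar>) ` sets \<rho>)"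
  proof (rule bdd_aboveI[of _ 1], clarsimp)
    fix B
    have "measure \<rho> B \<le> 1" "measure \<rho>' B \<le> 1"
      using assms by (auto intro: prob_space.prob_le_1)
    then show "\<bar>measure \<rho> B - measure \<rho>' B\<bar> \<le> 1"
      using measure_nonneg[of \<rho> B] measure_nonneg[of \<rho>' B] unfolding abs_le_iff by linarith
  qed
qed

lemma tv_least:
  assumes "\<And>A. A \<in> sets \<rho> \<Longrightarrow> \<bar>measure \<rho> A - measure \<rho>' A\<bar> \<le> c"
  shows "tv_dist \<rho> \<rho>' \<le> c"
  unfolding tv_dist_def
  by (rule cSUP_least) (use assms sets.empty_sets in auto)

lemma tv_sym:
  assumes "sets \<rho> = sets \<rho>'"
  shows "tv_dist \<rho> \<rho>' = tv_dist \<rho>' \<rho>"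
  unfolding tv_dist_def assms by (simp add: abs_minus_commute)

lemma card_floor_aux:
  fixes t :: real and n :: nat
  assumes "0 \<le> t" "t \<le> real n"
  shows "real (card {j\<in>{1..n}. real j \<le> t}) \<le> t \<and> t < real (card {j\<in>{1..n}. real j \<le> t}) + 1"
proof -
  have "{j\<in>{1..n}. real j \<le> t} = {1..nat \<lfloor>t\<rfloor>}"
  proof safe
    fix j assume "j \<in> {1..n}" "real j \<le> t"
    then show "j \<in> {1..nat \<lfloor>t\<rfloor>}"
      by (auto simp: le_nat_iff le_floor_iff)
  next
    fix j assume "j \<in> {1..nat \<lfloor>t\<rfloor>}"
    then show "j \<in> {1..n}" "real j \<le> t"
      using assms by (auto simp: le_nat_iff le_floor_iff)
  qed
  then show ?thesis using assms by auto
qed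

lemma tv_integral:
  assumes P: "prob_space \<rho>" "prob_space \<rho>'" and S: "sets \<rho>' = sets \<rho>"
    and phi[measurable]: "\<phi> \<in> borel_measurable \<rho>"
    and b: "\<And>x. x \<in> space \<rho> \<Longrightarrow> 0 \<le> \<phi> x \<and> \<phi> x \<le> 1"
  shows "(\<integral>x. \<phi> x \<partial>\<rho>) - (\<integral>x. \<phi> x \<partial>\<rho>') \<le> tv_dist \<rho> \<rho>'"
proof -
  interpret p1: prob_space \<rho> by fact
  interpret p2: prob_space \<rho>' by fact
  have sp: "space \<rho>' = space \<rho>" using S by (rule sets_eq_imp_space_eq)
  have phi2[measurable]: "\<phi> \<in> borel_measurable \<rho>'" using phi by (simp add: measurable_cong_sets[OF S refl])
  have int1: "integrable \<rho> \<phi>"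
    by (rule p1.integrable_const_bound[where B=1]) (use b in auto)
  have int2: "integrable \<rho>' \<phi>"
    by (rule p2.integrable_const_bound[where B=1]) (use b sp in auto)
  have key: "(\<integral>x. \<phi> x \<partial>\<rho>) - (\<integral>x. \<phi> x \<partial>\<rho>') \<le> tv_dist \<rho> \<rho>' + 1 / real n" if n: "n \<ge> 1" for n :: nat
  proof -
    define A where "A j = {x \<in> space \<rho>. real j / real n \<le> \<phi> x}" for j :: nat
    have A[measurable]: "A j \<in> sets \<rho>" for j unfolding A_def by measurable
    define \<psi> where "\<psi> x = (\<Sum>j\<in>{1..n}. indicator (A j) x) / real n" for x
    have psi_eq: "\<psi> x = real (card {j\<in>{1..n}. real j \<le> real n * \<phi> x}) / real n" if x: "x \<in> space \<rho>" for x
    proof -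
      have "(\<Sum>j\<in>{1..n}. indicator (A j) x :: real) = (\<Sum>j\<in>{1..n}. if real j \<le> real n * \<phi> x then 1 else 0)"
        using x n by (intro sum.cong) (auto simp: A_def indicator_def divide_le_eq mult.commute)
      also have "\<dots> = real (card {j\<in>{1..n}. real j \<le> real n * \<phi> x})"
        by (subst sum.inter_filter[symmetric]) simp_all
      finally show ?thesis unfolding \<psi>_def by simp
    qed
    have psi_b: "\<psi> x \<le> \<phi> x \<and> \<phi> x < \<psi> x + 1 / real n" if x: "x \<in> space \<rho>" for x
    proof -
      have "0 \<le> real n * \<phi> x" "real n * \<phi> x \<le> real n"
        using b[OF x] by (auto simp: mult_left_le)
      from card_floor_aux[OF this] obtain c where
        c1: "real c \<le> real n * \<phi> x" and c2: "real n * \<phi> x < real c + 1"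
        and c: "c = card {j\<in>{1..n}. real j \<le> real n * \<phi> x}" by blast
      have np: "real n > 0" using n by simp
      have "real c / real n \<le> \<phi> x" using c1 np by (simp add: divide_le_eq mult.commute)
      moreover have "\<phi> x < (real c + 1) / real n" using c2 np by (simp add: less_divide_eq mult.commute)
      ultimately show ?thesis
        unfolding psi_eq[OF x] c[symmetric] by (simp add: add_divide_distrib)
    qed
    have intpsi: "(\<integral>x. \<psi> x \<partial>M) = (\<Sum>j\<in>{1..n}. measure M (A j)) / real n"
      if "sets M = sets \<rho>" and "prob_space M" for M
    proof -
      interpret pm: prob_space M by fact
      have AM: "\<And>j. A j \<in> sets M" using that A by auto
      have "(\<integral>x. \<psi> x \<partial>M) = (\<integral>x. (\<Sum>j\<in>{1..n}. indicator (A j) x) \<partial>M) / real n"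
        unfolding \<psi>_def by (rule integral_divide_zero)
      also have "(\<integral>x. (\<Sum>j\<in>{1..n}. indicator (A j) x :: real) \<partial>M) = (\<Sum>j\<in>{1..n}. \<integral>x. indicator (A j) x \<partial>M)"
        by (rule Bochner_Integration.integral_sum) (use AM in \<open>auto intro!: integrable_real_indicator simp: pm.emeasure_finite less_top[symmetric]\<close>)
      also have "\<dots> = (\<Sum>j\<in>{1..n}. measure M (A j))"
        by (intro sum.cong refl) (simp add: AM sets.Int_space_eq2)
      finally show ?thesis .
    qed
    have ipsi1: "integrable \<rho> \<psi>" "integrable \<rho>' \<psi>"
      unfolding \<psi>_def using A S by (auto intro!: integrable_real_indicator simp: p1.emeasure_finite p2.emeasure_finite less_top[symmetric])
    have "(\<integral>x. \<phi> x \<partial>\<rho>) \<le> (\<integral>x. \<psi> x + 1 / real n \<partial>\<rho>)"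
      by (rule integral_mono) (use int1 ipsi1 psi_b in \<open>auto dest: less_imp_le\<close>)
    also have "\<dots> = (\<integral>x. \<psi> x \<partial>\<rho>) + 1 / real n"
      using ipsi1 by (simp add: p1.prob_space)
    finally have i1: "(\<integral>x. \<phi> x \<partial>\<rho>) \<le> (\<integral>x. \<psi> x \<partial>\<rho>) + 1 / real n" .
    have i2: "(\<integral>x. \<psi> x \<partial>\<rho>') \<le> (\<integral>x. \<phi> x \<partial>\<rho>')"
      by (rule integral_mono) (use int2 ipsi1 psi_b sp in auto)
    have "(\<integral>x. \<psi> x \<partial>\<rho>) - (\<integral>x. \<psi> x \<partial>\<rho>') = (\<Sum>j\<in>{1..n}. measure \<rho> (A j) - measure \<rho>' (A j)) / real n"
      using intpsi[of \<rho>] intpsi[of \<rho>'] P S by (simp add: sum_subtractf diff_divide_distrib)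
    also have "\<dots> \<le> (\<Sum>j\<in>{1..n}. tv_dist \<rho> \<rho>') / real n"
      by (intro divide_right_mono sum_mono order.trans[OF abs_ge_self tv_upper[OF P A]]) auto
    also have "\<dots> = tv_dist \<rho> \<rho>'" using n by simp
    finally show ?thesis using i1 i2 by linarith
  qed
  show ?thesis
  proof (rule ccontr)
    assume "\<not> ?thesis"
    then have d: "0 < (\<integral>x. \<phi> x \<partial>\<rho>) - (\<integral>x. \<phi> x \<partial>\<rho>') - tv_dist \<rho> \<rho>'" by simp
    obtain n :: nat where n: "1 / ((\<integral>x. \<phi> x \<partial>\<rho>) - (\<integral>x. \<phi> x \<partial>\<rho>') - tv_dist \<rho> \<rho>') < real n"
      using reals_Archimedean2 by blast
    then have n1: "n \<ge> 1" using d
      by (metis less_one not_less of_nat_0 of_nat_less_0_iff order_less_le zero_less_divide_1_iff gr0I less_numeral_extra(3) of_nat_0_less_iff)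
    have "1 / real n < (\<integral>x. \<phi> x \<partial>\<rho>) - (\<integral>x. \<phi> x \<partial>\<rho>') - tv_dist \<rho> \<rho>'"
      using n d n1 by (simp add: divide_less_eq field_simps)
    with key[OF n1] show False by linarith
  qed
qed



fun runk :: "(nat \<Rightarrow> 'b \<Rightarrow> 'b measure) \<Rightarrow> nat list \<Rightarrow> 'b measure \<Rightarrow> 'b measure" where
  "runk C [] \<nu> = \<nu>"
| "runk C (j#js) \<nu> = runk C js (bind \<nu> (C j))"

lemma runk_append: "runk C (js @ [j]) \<nu> = bind (runk C js \<nu>) (C j)"
  by (induction js arbitrary: \<nu>) auto

lemma gibbs_iter_runk: "gibbs_iter K Ms Q n \<nu> = runk (\<lambda>j. gibbs_step K Ms j (Q j)) [0..<n] \<nu>"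
  by (induction n) (auto simp: runk_append)

definition kap :: "nat \<Rightarrow> (nat \<Rightarrow> 'a measure) \<Rightarrow> nat \<Rightarrow> ((nat \<Rightarrow> 'a) \<Rightarrow> 'a measure)
    \<Rightarrow> (nat \<Rightarrow> 'a) \<Rightarrow> (nat \<Rightarrow> 'a) measure" where
  "kap K Ms i Q z = distr (Q z) (prodX K Ms) (\<lambda>y. z(i := y))"

lemma upd_restrict:
  assumes "x \<in> space (prodX K Ms)" "i < K"
  shows "(restrict x ({..<K} - {i}))(i := y) = x(i := y)"
  using assms by (auto simp: fun_eq_iff restrict_def space_PiM PiE_def extensional_def)

lemma gibbs_step_kap:
  assumes "x \<in> space (prodX K Ms)" "i < K"
  shows "gibbs_step K Ms i Q x = kap K Ms i Q (restrict x ({..<K} - {i}))"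
  unfolding gibbs_step_def kap_def upd_restrict[OF assms] ..

lemma upd_meas:
  assumes "i < K"
  shows "(\<lambda>p. (fst p)(i := snd p)) \<in> PiM ({..<K} - {i}) Ms \<Otimes>\<^sub>M Ms i \<rightarrow>\<^sub>M prodX K Ms"
proof (rule measurable_PiM_single'[where f="\<lambda>j p. ((fst p)(i := snd p)) j"])
  fix j assume j: "j \<in> {..<K}"
  show "(\<lambda>p. ((fst p)(i := snd p)) j) \<in> PiM ({..<K} - {i}) Ms \<Otimes>\<^sub>M Ms i \<rightarrow>\<^sub>M Ms j"
  proof (cases "j = i")
    case True
    have eq: "(\<lambda>p. ((fst p)(i := snd p)) j) = snd" using True by auto
    show ?thesis unfolding eq unfolding True by (rule measurable_snd)
  next
    case False
    then have eq: "(\<lambda>p. ((fst p)(i := snd p)) j) = (\<lambda>p. fst p j)" by auto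
    show ?thesis unfolding eq
      by (rule measurable_compose[OF measurable_fst measurable_component_singleton]) (use False j in auto)
  qed
next
  show "(\<lambda>p. (fst p)(i := snd p)) \<in> space (PiM ({..<K} - {i}) Ms \<Otimes>\<^sub>M Ms i) \<rightarrow> (\<Pi>\<^sub>E j\<in>{..<K}. space (Ms j))"
  proof (rule Pi_I)
    fix p assume p: "p \<in> space (PiM ({..<K} - {i}) Ms \<Otimes>\<^sub>M Ms i)"
    then have "fst p \<in> space (PiM ({..<K} - {i}) Ms)" and p2: "snd p \<in> space (Ms i)"
      unfolding space_pair_measure by (simp_all only: mem_Times_iff)
    then have p1: "fst p \<in> (\<Pi>\<^sub>E j\<in>{..<K} - {i}. space (Ms j))"
      by (simp only: space_PiM)
    have ins: "insert i ({..<K} - {i}) = {..<K}" using assms by auto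
    show "(fst p)(i := snd p) \<in> (\<Pi>\<^sub>E j\<in>{..<K}. space (Ms j))"
      using PiE_fun_upd[OF p2 p1] unfolding ins .
  qed
qed

lemma kap_meas:
  assumes "i < K" and Q: "Q \<in> PiM ({..<K} - {i}) Ms \<rightarrow>\<^sub>M prob_algebra (Ms i)"
  shows "kap K Ms i Q \<in> PiM ({..<K} - {i}) Ms \<rightarrow>\<^sub>M prob_algebra (prodX K Ms)"
proof (rule measurable_prob_algebraI)
  have "(\<lambda>z. distr (Q z) (prodX K Ms) (\<lambda>y. z(i := y))) \<in> PiM ({..<K} - {i}) Ms \<rightarrow>\<^sub>M subprob_algebra (prodX K Ms)"
  proof (rule measurable_distr2)
    show "(\<lambda>(z, y). z(i := y)) \<in> PiM ({..<K} - {i}) Ms \<Otimes>\<^sub>M Ms i \<rightarrow>\<^sub>M prodX K Ms"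
      using upd_meas[OF assms(1)] by (simp add: case_prod_beta')
    show "Q \<in> PiM ({..<K} - {i}) Ms \<rightarrow>\<^sub>M subprob_algebra (Ms i)"
      using Q by (rule measurable_prob_algebraD)
  qed
  then show "kap K Ms i Q \<in> PiM ({..<K} - {i}) Ms \<rightarrow>\<^sub>M subprob_algebra (prodX K Ms)"
    unfolding kap_def[abs_def] .
next
  fix z assume z: "z \<in> space (PiM ({..<K} - {i}) Ms)"
  have Qz: "Q z \<in> space (prob_algebra (Ms i))" using Q z by (rule measurable_space)
  then have sQ: "sets (Q z) = sets (Ms i)" and pQ: "prob_space (Q z)"
    by (auto simp: space_prob_algebra)
  have "(\<lambda>y. z(i := y)) \<in> Ms i \<rightarrow>\<^sub>M prodX K Ms"
    using measurable_Pair2[OF upd_meas[OF assms(1)] z] by simp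
  then have "(\<lambda>y. z(i := y)) \<in> Q z \<rightarrow>\<^sub>M prodX K Ms"
    unfolding measurable_cong_sets[OF sQ refl] .
  then have "prob_space (distr (Q z) (prodX K Ms) (\<lambda>y. z(i := y)))"
    by (rule prob_space.prob_space_distr[OF pQ])
  then show "prob_space (kap K Ms i Q z)"
    by (simp only: kap_def)
qed

lemma step_meas:
  assumes "i < K" and Q: "Q \<in> PiM ({..<K} - {i}) Ms \<rightarrow>\<^sub>M prob_algebra (Ms i)"
  shows "gibbs_step K Ms i Q \<in> prodX K Ms \<rightarrow>\<^sub>M prob_algebra (prodX K Ms)"
proof -
  have "(\<lambda>x. kap K Ms i Q (restrict x ({..<K} - {i}))) \<in> prodX K Ms \<rightarrow>\<^sub>M prob_algebra (prodX K Ms)"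
    by (rule measurable_compose[OF measurable_restrict_subset kap_meas[OF assms]]) auto
  then show ?thesis
    by (rule measurable_cong[THEN iffD1, rotated]) (simp add: gibbs_step_kap[OF _ assms(1)])
qed



lemma disint:
  assumes pi: "prob_space \<pi>" "sets \<pi> = sets (prodX K Ms)"
    and cd: "is_cond_dist K Ms \<pi> i Q" and i: "i < K"
    and T: "T \<in> sets (PiM ({..<K} - {i}) Ms)" and E: "E \<in> sets (prodX K Ms)"
  shows "emeasure \<pi> {x \<in> space \<pi>. restrict x ({..<K} - {i}) \<in> T \<and> x \<in> E}
       = (\<integral>\<^sup>+x. indicator T (restrict x ({..<K} - {i})) * emeasure (gibbs_step K Ms i Q x) E \<partial>\<pi>)"
proof -
  let ?I = "{..<K} - {i}"
  let ?Y = "PiM ?I Ms"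
  let ?Z = "Ms i"
  let ?PS = "?Y \<Otimes>\<^sub>M ?Z"
  let ?X = "prodX K Ms"
  interpret p: prob_space \<pi> by fact
  have Qm: "Q \<in> ?Y \<rightarrow>\<^sub>M prob_algebra ?Z"
    and cdeq: "\<And>B E. B \<in> sets ?Y \<Longrightarrow> E \<in> sets ?Z \<Longrightarrow>
        emeasure \<pi> {x \<in> space \<pi>. restrict x ?I \<in> B \<and> x i \<in> E}
        = (\<integral>\<^sup>+ x. indicator B (restrict x ?I) * emeasure (Q (restrict x ?I)) E \<partial>\<pi>)"
    using cd unfolding is_cond_dist_def by auto
  have sp: "space \<pi> = space ?X" using pi(2) by (rule sets_eq_imp_space_eq)
  have rm: "(\<lambda>x. restrict x ?I) \<in> \<pi> \<rightarrow>\<^sub>M ?Y"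
    unfolding measurable_cong_sets[OF pi(2) refl] by (rule measurable_restrict_subset) auto
  have im: "(\<lambda>x. x i) \<in> \<pi> \<rightarrow>\<^sub>M ?Z"
    unfolding measurable_cong_sets[OF pi(2) refl] by (rule measurable_component_singleton) (use i in auto)
  have hm: "(\<lambda>x. (restrict x ?I, x i)) \<in> \<pi> \<rightarrow>\<^sub>M ?PS"
    by (rule measurable_Pair[OF rm im])
  have Qz: "sets (Q z) = sets ?Z" "prob_space (Q z)" if "z \<in> space ?Y" for z
    using measurable_space[OF Qm that] by (auto simp: space_prob_algebra)
  have Pm: "Pair z \<in> Q z \<rightarrow>\<^sub>M ?PS" if "z \<in> space ?Y" for z
    unfolding measurable_cong_sets[OF Qz(1)[OF that] refl] by (rule measurable_Pair1'[OF that])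
  define F where "F x = distr (Q (restrict x ?I)) ?PS (Pair (restrict x ?I))" for x
  have Fm: "F \<in> \<pi> \<rightarrow>\<^sub>M subprob_algebra ?PS"
  proof -
    have "(\<lambda>x. distr (Q (restrict x ?I)) ?PS (Pair (restrict x ?I))) \<in> \<pi> \<rightarrow>\<^sub>M subprob_algebra ?PS"
    proof (rule measurable_distr2)
      have "(\<lambda>p. (restrict (fst p) ?I, snd p)) \<in> \<pi> \<Otimes>\<^sub>M ?Z \<rightarrow>\<^sub>M ?PS"
        by (rule measurable_Pair[OF measurable_compose[OF measurable_fst rm] measurable_snd])
      moreover have "(\<lambda>(x, y). (restrict x ?I, y)) = (\<lambda>p. (restrict (fst p) ?I, snd p))"
        by (auto simp: fun_eq_iff)
      ultimately show "(\<lambda>(x, y). Pair (restrict x ?I) y) \<in> \<pi> \<Otimes>\<^sub>M ?Z \<rightarrow>\<^sub>M ?PS" by simp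
      show "(\<lambda>x. Q (restrict x ?I)) \<in> \<pi> \<rightarrow>\<^sub>M subprob_algebra ?Z"
        by (rule measurable_compose[OF rm measurable_prob_algebraD[OF Qm]])
    qed
    then show ?thesis unfolding F_def[abs_def] .
  qed
  have rsp: "restrict x ?I \<in> space ?Y" if "x \<in> space \<pi>" for x
    using measurable_space[OF rm that] .
  have sF: "sets (F x) = sets ?PS" for x unfolding F_def by simp
  have eF: "emeasure (F x) A = emeasure (Q (restrict x ?I)) (Pair (restrict x ?I) -` A \<inter> space ?Z)"
    if "x \<in> space \<pi>" "A \<in> sets ?PS" for x A
  proof -
    have sp2: "space (Q (restrict x ?I)) = space ?Z"
      by (rule sets_eq_imp_space_eq[OF Qz(1)[OF rsp[OF that(1)]]])
    show ?thesis
      using emeasure_distr[OF Pm[OF rsp[OF that(1)]] that(2)] unfolding F_def sp2 .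
  qed
  define \<rho> where "\<rho> = distr \<pi> ?PS (\<lambda>x. (restrict x ?I, x i))"
  define \<rho>' where "\<rho>' = bind \<pi> F"
  have ne: "space \<pi> \<noteq> {}" by (rule p.not_empty)
  have "\<rho> = \<rho>'"
  proof (rule measure_eqI_generator_eq[where E="{a \<times> b | a b. a \<in> sets ?Y \<and> b \<in> sets ?Z}"
        and \<Omega>="space ?Y \<times> space ?Z" and A="\<lambda>_. space ?Y \<times> space ?Z"])
    show "Int_stable {a \<times> b | a b. a \<in> sets ?Y \<and> b \<in> sets ?Z}"
      by (rule Int_stable_pair_measure_generator)
    show "{a \<times> b | a b. a \<in> sets ?Y \<and> b \<in> sets ?Z} \<subseteq> Pow (space ?Y \<times> space ?Z)"
    proof (rule subsetI)
      fix X assume "X \<in> {a \<times> b | a b. a \<in> sets ?Y \<and> b \<in> sets ?Z}"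
      then obtain a b where "X = a \<times> b" "a \<in> sets ?Y" "b \<in> sets ?Z" by blast
      then show "X \<in> Pow (space ?Y \<times> space ?Z)"
        using sets.sets_into_space[of a ?Y] sets.sets_into_space[of b ?Z] by auto
    qed
    show "sets \<rho> = sigma_sets (space ?Y \<times> space ?Z) {a \<times> b | a b. a \<in> sets ?Y \<and> b \<in> sets ?Z}"
      unfolding \<rho>_def by (simp only: sets_distr sets_pair_measure)
    show "sets \<rho>' = sigma_sets (space ?Y \<times> space ?Z) {a \<times> b | a b. a \<in> sets ?Y \<and> b \<in> sets ?Z}"
      unfolding \<rho>'_def by (subst sets_bind[OF sF ne]) (simp only: sets_pair_measure)
    show "range (\<lambda>_. space ?Y \<times> space ?Z) \<subseteq> {a \<times> b | a b. a \<in> sets ?Y \<and> b \<in> sets ?Z}"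
      by blast
    show "(\<Union>i. space ?Y \<times> space ?Z) = space ?Y \<times> space ?Z" by simp
    have "prob_space \<rho>" unfolding \<rho>_def by (rule p.prob_space_distr[OF hm])
    then show "emeasure \<rho> (space ?Y \<times> space ?Z) \<noteq> \<infinity>"
      by (simp add: finite_measure.emeasure_finite prob_space.finite_measure)
  next
    fix X assume "X \<in> {a \<times> b | a b. a \<in> sets ?Y \<and> b \<in> sets ?Z}"
    then obtain a b where X: "X = a \<times> b" and a: "a \<in> sets ?Y" and b: "b \<in> sets ?Z" by blast
    have abs: "a \<times> b \<in> sets ?PS" using a b by (rule pair_measureI)
    have "emeasure \<rho> X = emeasure \<pi> ((\<lambda>x. (restrict x ?I, x i)) -` (a \<times> b) \<inter> space \<pi>)"
      unfolding \<rho>_def X by (rule emeasure_distr[OF hm abs])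
    also have "(\<lambda>x. (restrict x ?I, x i)) -` (a \<times> b) \<inter> space \<pi> = {x \<in> space \<pi>. restrict x ?I \<in> a \<and> x i \<in> b}"
      by blast
    also have "emeasure \<pi> \<dots> = (\<integral>\<^sup>+ x. indicator a (restrict x ?I) * emeasure (Q (restrict x ?I)) b \<partial>\<pi>)"
      by (rule cdeq[OF a b])
    also have "\<dots> = (\<integral>\<^sup>+ x. emeasure (F x) X \<partial>\<pi>)"
    proof (rule nn_integral_cong)
      fix x assume x: "x \<in> space \<pi>"
      have bsub: "b \<subseteq> space ?Z" using b by (rule sets.sets_into_space)
      have "Pair (restrict x ?I) -` X \<inter> space ?Z = (if restrict x ?I \<in> a then b else {})"
        unfolding X using bsub by auto
      then show "indicator a (restrict x ?I) * emeasure (Q (restrict x ?I)) b = emeasure (F x) X"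
        unfolding eF[OF x abs[folded X]] by (simp add: indicator_def)
    qed
    also have "\<dots> = emeasure \<rho>' X"
      unfolding \<rho>'_def by (rule emeasure_bind[OF ne Fm abs[folded X], symmetric])
    finally show "emeasure \<rho> X = emeasure \<rho>' X" .
  qed
  define G where "G = {p \<in> space ?PS. fst p \<in> T \<and> (fst p)(i := snd p) \<in> E}"
  have G: "G \<in> sets ?PS"
  proof -
    have "G = ((\<lambda>p. (fst p)(i := snd p)) -` E \<inter> space ?PS) \<inter> (fst -` T \<inter> space ?PS)"
      unfolding G_def by blast
    also have "\<dots> \<in> sets ?PS"
      by (intro sets.Int measurable_sets[OF upd_meas[OF i] E] measurable_sets[OF measurable_fst T])
    finally show ?thesis .
  qed
  have "emeasure \<rho> G = emeasure \<pi> ((\<lambda>x. (restrict x ?I, x i)) -` G \<inter> space \<pi>)"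
    unfolding \<rho>_def by (rule emeasure_distr[OF hm G])
  also have "(\<lambda>x. (restrict x ?I, x i)) -` G \<inter> space \<pi> = {x \<in> space \<pi>. restrict x ?I \<in> T \<and> x \<in> E}"
  proof -
    have h1: "(restrict x ?I, x i) \<in> space ?PS" if "x \<in> space \<pi>" for x
      using measurable_space[OF hm that] .
    have h2: "(restrict x ?I)(i := x i) = x" if "x \<in> space \<pi>" for x
      using upd_restrict[of x K Ms i "x i"] that i sp by simp
    show ?thesis unfolding G_def using h1 h2 by auto
  qed
  finally have L: "emeasure \<rho> G = emeasure \<pi> {x \<in> space \<pi>. restrict x ?I \<in> T \<and> x \<in> E}" .
  have "emeasure \<rho>' G = (\<integral>\<^sup>+ x. emeasure (F x) G \<partial>\<pi>)"
    unfolding \<rho>'_def by (rule emeasure_bind[OF ne Fm G])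
  also have "\<dots> = (\<integral>\<^sup>+x. indicator T (restrict x ?I) * emeasure (gibbs_step K Ms i Q x) E \<partial>\<pi>)"
  proof (rule nn_integral_cong)
    fix x assume x: "x \<in> space \<pi>"
    have xX: "x \<in> space ?X" using x sp by simp
    have um: "(\<lambda>y. x(i := y)) \<in> Q (restrict x ?I) \<rightarrow>\<^sub>M ?X"
    proof -
      have "(\<lambda>y. (restrict x ?I)(i := y)) \<in> ?Z \<rightarrow>\<^sub>M ?X"
        using measurable_Pair2[OF upd_meas[OF i] rsp[OF x]] by simp
      then show ?thesis
        unfolding measurable_cong_sets[OF Qz(1)[OF rsp[OF x]] refl] upd_restrict[OF xX i] .
    qed
    have spQ: "space (Q (restrict x ?I)) = space ?Z"
      by (rule sets_eq_imp_space_eq[OF Qz(1)[OF rsp[OF x]]])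
    have g: "emeasure (gibbs_step K Ms i Q x) E = emeasure (Q (restrict x ?I)) ((\<lambda>y. x(i := y)) -` E \<inter> space ?Z)"
      unfolding gibbs_step_def emeasure_distr[OF um E] spQ ..
    have "Pair (restrict x ?I) -` G \<inter> space ?Z = (if restrict x ?I \<in> T then (\<lambda>y. x(i := y)) -` E \<inter> space ?Z else {})"
      unfolding G_def using rsp[OF x] upd_restrict[OF xX i] by (auto simp: space_pair_measure)
    then show "emeasure (F x) G = indicator T (restrict x ?I) * emeasure (gibbs_step K Ms i Q x) E"
      unfolding eF[OF x G] g by (simp add: indicator_def)
  qed
  finally show ?thesis using L \<open>\<rho> = \<rho>'\<close> by simp
qed



lemma pe: "prob_space M \<Longrightarrow> emeasure M A = ennreal (measure M A)"
proof -
  assume "prob_space M"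
  then interpret prob_space M .
  show ?thesis by (rule emeasure_eq_measure)
qed

lemma int01:
  fixes f :: "'a \<Rightarrow> real"
  assumes "prob_space M" "f \<in> borel_measurable M" "\<And>x. x \<in> space M \<Longrightarrow> \<bar>f x\<bar> \<le> c"
  shows "integrable M f"
proof -
  interpret prob_space M by fact
  show ?thesis by (rule integrable_const_bound[where B=c]) (use assms in auto)
qed

lemma measure_bind_pa:
  assumes nu: "prob_space \<nu>" "sets \<nu> = sets N" and C: "C \<in> N \<rightarrow>\<^sub>M prob_algebra L" and E: "E \<in> sets L"
  shows "measure (bind \<nu> C) E = (\<integral>x. measure (C x) E \<partial>\<nu>)"
proof -
  have nuS: "\<nu> \<in> space (prob_algebra N)" using nu by (simp add: space_prob_algebra)
  have C': "C \<in> \<nu> \<rightarrow>\<^sub>M prob_algebra L" using C unfolding measurable_cong_sets[OF nu(2) refl] .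
  have pC: "prob_space (C x)" if "x \<in> space \<nu>" for x
    using measurable_space[OF C' that] by (simp add: space_prob_algebra)
  have fm: "(\<lambda>x. measure (C x) E) \<in> borel_measurable \<nu>"
    by (rule measurable_compose[OF C' measurable_measure_prob_algebra[OF E]])
  have "emeasure (bind \<nu> C) E = (\<integral>\<^sup>+x. emeasure (C x) E \<partial>\<nu>)"
    by (rule emeasure_bind_prob_algebra[OF nuS C E])
  also have "\<dots> = (\<integral>\<^sup>+x. ennreal (measure (C x) E) \<partial>\<nu>)"
    by (rule nn_integral_cong) (simp add: pe[OF pC])
  finally have "measure (bind \<nu> C) E = enn2real (\<integral>\<^sup>+x. ennreal (measure (C x) E) \<partial>\<nu>)"
    by (simp add: measure_def)
  also have "\<dots> = (\<integral>x. measure (C x) E \<partial>\<nu>)"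
    by (rule integral_eq_nn_integral[OF fm, symmetric]) simp
  finally show ?thesis .
qed

lemma dominate:
  assumes pn: "prob_space \<nu>" and pp: "prob_space \<pi>" and S: "sets \<nu> = sets \<pi>"
    and dom: "\<forall>A\<in>sets \<pi>. measure \<nu> A \<le> M * measure \<pi> A"
    and hm: "h \<in> borel_measurable \<pi>" and hb: "\<And>x. x \<in> space \<pi> \<Longrightarrow> 0 \<le> h x \<and> h x \<le> 1"
  shows "(\<integral>x. h x \<partial>\<nu>) \<le> M * (\<integral>x. h x \<partial>\<pi>)"
proof -
  interpret n: prob_space \<nu> by fact
  interpret p: prob_space \<pi> by fact
  have sp: "space \<nu> = space \<pi>" using S by (rule sets_eq_imp_space_eq)
  have "measure \<nu> (space \<pi>) \<le> M * measure \<pi> (space \<pi>)" using dom by auto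
  moreover have "measure \<nu> (space \<pi>) = 1" using sp n.prob_space by simp
  ultimately have M0: "0 \<le> M" by (simp add: p.prob_space)
  have le: "\<nu> \<le> scale_measure (ennreal M) \<pi>"
  proof -
    have "emeasure \<nu> A \<le> emeasure (scale_measure (ennreal M) \<pi>) A" for A
    proof (cases "A \<in> sets \<pi>")
      case True
      have "emeasure \<nu> A = ennreal (measure \<nu> A)" by (simp add: n.emeasure_eq_measure)
      also have "\<dots> \<le> ennreal (M * measure \<pi> A)" using dom True by (simp add: ennreal_leI)
      also have "\<dots> = ennreal M * emeasure \<pi> A" using M0 by (simp add: p.emeasure_eq_measure ennreal_mult)
      finally show ?thesis by simp
    next
      case False
      then show ?thesis using S by (simp add: emeasure_notin_sets)
    qed
    then show ?thesis
      using S sp by (simp add: le_measure_iff space_scale_measure le_fun_def)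
  qed
  have hm': "h \<in> borel_measurable \<nu>" using hm unfolding measurable_cong_sets[OF S refl] .
  have "(\<integral>\<^sup>+x. ennreal (h x) \<partial>\<nu>) \<le> (\<integral>\<^sup>+x. ennreal (h x) \<partial>scale_measure (ennreal M) \<pi>)"
    by (rule nn_integral_mono_measure[OF _ le]) (simp add: S)
  also have "\<dots> = ennreal M * (\<integral>\<^sup>+x. ennreal (h x) \<partial>\<pi>)"
    by (rule nn_integral_scale_measure) (use hm in measurable)
  finally have nn: "(\<integral>\<^sup>+x. ennreal (h x) \<partial>\<nu>) \<le> ennreal M * (\<integral>\<^sup>+x. ennreal (h x) \<partial>\<pi>)" .
  have fin: "(\<integral>\<^sup>+x. ennreal (h x) \<partial>\<pi>) \<le> 1"
  proof -
    have "(\<integral>\<^sup>+x. ennreal (h x) \<partial>\<pi>) \<le> (\<integral>\<^sup>+x. 1 \<partial>\<pi>)"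
      by (rule nn_integral_mono) (use hb in auto)
    then show ?thesis by (simp add: p.emeasure_space_1)
  qed
  have "(\<integral>x. h x \<partial>\<nu>) = enn2real (\<integral>\<^sup>+x. ennreal (h x) \<partial>\<nu>)"
    by (rule integral_eq_nn_integral[OF hm']) (use hb sp in auto)
  also have "\<dots> \<le> enn2real (ennreal M * (\<integral>\<^sup>+x. ennreal (h x) \<partial>\<pi>))"
  proof (rule enn2real_mono[OF nn])
    have "ennreal M * (\<integral>\<^sup>+x. ennreal (h x) \<partial>\<pi>) \<le> ennreal M * 1"
      by (rule mult_left_mono[OF fin]) simp
    then show "ennreal M * (\<integral>\<^sup>+x. ennreal (h x) \<partial>\<pi>) < \<top>"
      using le_less_trans by fastforce
  qed
  also have "\<dots> = M * enn2real (\<integral>\<^sup>+x. ennreal (h x) \<partial>\<pi>)"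
    using M0 by (simp add: enn2real_mult)
  also have "enn2real (\<integral>\<^sup>+x. ennreal (h x) \<partial>\<pi>) = (\<integral>x. h x \<partial>\<pi>)"
    by (rule integral_eq_nn_integral[OF hm, symmetric]) (use hb in auto)
  finally show ?thesis .
qed

lemma pa_iff: "\<rho> \<in> space (prob_algebra N) \<longleftrightarrow> prob_space \<rho> \<and> sets \<rho> = sets N"
  by (auto simp: space_prob_algebra)

lemma bind_pa:
  assumes "\<rho> \<in> space (prob_algebra N)" "C \<in> N \<rightarrow>\<^sub>M prob_algebra N"
  shows "bind \<rho> C \<in> space (prob_algebra N)"
  using prob_space_bind'[OF assms] sets_bind'[OF assms] by (simp add: pa_iff)

lemma tv_bind:
  assumes r: "\<rho> \<in> space (prob_algebra N)" "\<rho>' \<in> space (prob_algebra N)" and C: "C \<in> N \<rightarrow>\<^sub>M prob_algebra N"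
  shows "tv_dist (bind \<rho> C) (bind \<rho>' C) \<le> tv_dist \<rho> \<rho>'"
proof (rule tv_least)
  fix A assume "A \<in> sets (bind \<rho> C)"
  then have A: "A \<in> sets N" using sets_bind'[OF r(1) C] by simp
  have p: "prob_space \<rho>" "sets \<rho> = sets N" "prob_space \<rho>'" "sets \<rho>' = sets N" using r by (auto simp: pa_iff)
  have C1: "C \<in> \<rho> \<rightarrow>\<^sub>M prob_algebra N" using C unfolding measurable_cong_sets[OF p(2) refl] .
  have fm: "(\<lambda>x. measure (C x) A) \<in> borel_measurable \<rho>"
    by (rule measurable_compose[OF C1 measurable_measure_prob_algebra[OF A]])
  have b: "0 \<le> measure (C x) A \<and> measure (C x) A \<le> 1" if "x \<in> space \<rho>" for x
    using measurable_space[OF C1 that] by (auto simp: pa_iff intro: prob_space.prob_le_1)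
  have fm': "(\<lambda>x. measure (C x) A) \<in> borel_measurable \<rho>'"
    using fm unfolding measurable_cong_sets[OF p(2) refl] measurable_cong_sets[OF p(4) refl] .
  have sp: "space \<rho>' = space \<rho>" using p by (metis sets_eq_imp_space_eq)
  have d1: "(\<integral>x. measure (C x) A \<partial>\<rho>) - (\<integral>x. measure (C x) A \<partial>\<rho>') \<le> tv_dist \<rho> \<rho>'"
    by (rule tv_integral[OF p(1) p(3) _ fm b]) (use p in simp)
  have d2: "(\<integral>x. measure (C x) A \<partial>\<rho>') - (\<integral>x. measure (C x) A \<partial>\<rho>) \<le> tv_dist \<rho>' \<rho>"
    by (rule tv_integral[OF p(3) p(1) _ fm' b[unfolded sp[symmetric]]]) (use p in simp)
  have "tv_dist \<rho>' \<rho> = tv_dist \<rho> \<rho>'" by (rule tv_sym) (use p in simp)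
  then show "\<bar>measure (bind \<rho> C) A - measure (bind \<rho>' C) A\<bar> \<le> tv_dist \<rho> \<rho>'"
    using d1 d2 measure_bind_pa[OF p(1,2) C A] measure_bind_pa[OF p(3,4) C A] by simp
qed

lemma runk_pa:
  assumes "\<rho> \<in> space (prob_algebra N)" "\<forall>j\<in>set js. C j \<in> N \<rightarrow>\<^sub>M prob_algebra N"
  shows "runk C js \<rho> \<in> space (prob_algebra N)"
  using assms by (induction js arbitrary: \<rho>) (auto intro: bind_pa)

lemma tv_runk:
  assumes "\<rho> \<in> space (prob_algebra N)" "\<rho>' \<in> space (prob_algebra N)"
    and "\<forall>j\<in>set js. C j \<in> N \<rightarrow>\<^sub>M prob_algebra N"
  shows "tv_dist (runk C js \<rho>) (runk C js \<rho>') \<le> tv_dist \<rho> \<rho>'"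
  using assms
proof (induction js arbitrary: \<rho> \<rho>')
  case Nil then show ?case by simp
next
  case (Cons j js)
  have Cj: "C j \<in> N \<rightarrow>\<^sub>M prob_algebra N" using Cons.prems by simp
  have "tv_dist (runk C (j#js) \<rho>) (runk C (j#js) \<rho>') = tv_dist (runk C js (bind \<rho> (C j))) (runk C js (bind \<rho>' (C j)))"
    by simp
  also have "\<dots> \<le> tv_dist (bind \<rho> (C j)) (bind \<rho>' (C j))"
    by (rule Cons.IH) (use Cons.prems bind_pa[OF _ Cj] in auto)
  also have "\<dots> \<le> tv_dist \<rho> \<rho>'"
    by (rule tv_bind[OF Cons.prems(1,2) Cj])
  finally show ?case .
qed

lemma disint_real:
  assumes pi: "prob_space \<pi>" "sets \<pi> = sets (prodX K Ms)" and cd: "is_cond_dist K Ms \<pi> i Q" and i: "i < K"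
    and T: "T \<in> sets (PiM ({..<K} - {i}) Ms)" and E: "E \<in> sets (prodX K Ms)"
  shows "(\<integral>x. indicator T (restrict x ({..<K} - {i})) * measure (gibbs_step K Ms i Q x) E \<partial>\<pi>)
       = measure \<pi> {x \<in> space \<pi>. restrict x ({..<K} - {i}) \<in> T \<and> x \<in> E}"
proof -
  let ?I = "{..<K} - {i}"
  have Qm: "Q \<in> PiM ?I Ms \<rightarrow>\<^sub>M prob_algebra (Ms i)" using cd unfolding is_cond_dist_def by auto
  have Sm: "gibbs_step K Ms i Q \<in> \<pi> \<rightarrow>\<^sub>M prob_algebra (prodX K Ms)"
    using step_meas[OF i Qm] unfolding measurable_cong_sets[OF pi(2) refl] .
  have rm: "(\<lambda>x. restrict x ?I) \<in> \<pi> \<rightarrow>\<^sub>M PiM ?I Ms"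
    unfolding measurable_cong_sets[OF pi(2) refl] by (rule measurable_restrict_subset) auto
  have fm: "(\<lambda>x. indicator T (restrict x ?I) * measure (gibbs_step K Ms i Q x) E) \<in> borel_measurable \<pi>"
    by (intro borel_measurable_times measurable_compose[OF rm borel_measurable_indicator[OF T]]
        measurable_compose[OF Sm measurable_measure_prob_algebra[OF E]])
  have pS: "prob_space (gibbs_step K Ms i Q x)" if "x \<in> space \<pi>" for x
    using measurable_space[OF Sm that] by (simp add: pa_iff)
  have "(\<integral>x. indicator T (restrict x ?I) * measure (gibbs_step K Ms i Q x) E \<partial>\<pi>)
      = enn2real (\<integral>\<^sup>+x. ennreal (indicator T (restrict x ?I) * measure (gibbs_step K Ms i Q x) E) \<partial>\<pi>)"
    by (rule integral_eq_nn_integral[OF fm]) simp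
  also have "(\<integral>\<^sup>+x. ennreal (indicator T (restrict x ?I) * measure (gibbs_step K Ms i Q x) E) \<partial>\<pi>)
      = (\<integral>\<^sup>+x. indicator T (restrict x ?I) * emeasure (gibbs_step K Ms i Q x) E \<partial>\<pi>)"
    by (rule nn_integral_cong) (simp add: pe[OF pS] indicator_def)
  also have "\<dots> = emeasure \<pi> {x \<in> space \<pi>. restrict x ?I \<in> T \<and> x \<in> E}"
    by (rule disint[OF pi cd i T E, symmetric])
  finally show ?thesis by (simp only: measure_def)
qed



lemma side:
  assumes nu: "prob_space \<nu>" "sets \<nu> = sets X"
    and p2: "prob_space \<pi>2" "sets \<pi>2 = sets X"
    and dom: "\<forall>A\<in>sets X. measure \<nu> A \<le> M * measure \<pi>2 A"
    and r: "r \<in> X \<rightarrow>\<^sub>M Y"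
    and gu: "gu \<in> borel_measurable Y" and gv: "gv \<in> borel_measurable Y"
    and b: "\<And>z. z \<in> space Y \<Longrightarrow> 0 \<le> gu z \<and> gu z \<le> 1 \<and> 0 \<le> gv z \<and> gv z \<le> 1"
    and L: "\<And>T. T \<in> sets Y \<Longrightarrow> (\<integral>x. indicator T (r x) * gu (r x) \<partial>\<pi>2) - (\<integral>x. indicator T (r x) * gv (r x) \<partial>\<pi>2) \<le> c"
  shows "(\<integral>x. gu (r x) \<partial>\<nu>) - (\<integral>x. gv (r x) \<partial>\<nu>) \<le> M * c"
proof -
  interpret n: prob_space \<nu> by fact
  interpret p: prob_space \<pi>2 by fact
  have spn: "space \<nu> = space X" using nu(2) by (rule sets_eq_imp_space_eq)
  have spp: "space \<pi>2 = space X" using p2(2) by (rule sets_eq_imp_space_eq)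
  have "measure \<nu> (space X) \<le> M * measure \<pi>2 (space X)" using dom by auto
  moreover have "measure \<nu> (space X) = 1" using spn n.prob_space by simp
  moreover have "measure \<pi>2 (space X) = 1" using spp p.prob_space by simp
  ultimately have M0: "0 \<le> M" by simp
  have rn: "r \<in> \<nu> \<rightarrow>\<^sub>M Y" using r unfolding measurable_cong_sets[OF nu(2) refl] .
  have rp: "r \<in> \<pi>2 \<rightarrow>\<^sub>M Y" using r unfolding measurable_cong_sets[OF p2(2) refl] .
  have rsp: "r x \<in> space Y" if "x \<in> space X" for x using measurable_space[OF r that] .
  define T where "T = {z \<in> space Y. gv z < gu z}"
  have T: "T \<in> sets Y" unfolding T_def using gu gv by measurable
  have Tr: "indicator T (r x) = (if gv (r x) < gu (r x) then 1 else (0::real))" if "x \<in> space X" for x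
    using rsp[OF that] by (simp add: T_def indicator_def)
  define h where "h x = indicator T (r x) * (gu (r x) - gv (r x))" for x
  have hm: "h \<in> borel_measurable X" unfolding h_def
    by (intro borel_measurable_times borel_measurable_diff measurable_compose[OF r borel_measurable_indicator[OF T]]
        measurable_compose[OF r gu] measurable_compose[OF r gv])
  have hmp: "h \<in> borel_measurable \<pi>2" using hm unfolding measurable_cong_sets[OF p2(2) refl] .
  have hmn: "h \<in> borel_measurable \<nu>" using hm unfolding measurable_cong_sets[OF nu(2) refl] .
  have hb: "0 \<le> h x \<and> h x \<le> 1" if "x \<in> space X" for x
    using b[OF rsp[OF that]] Tr[OF that] by (auto simp: h_def)
  have hge: "gu (r x) - gv (r x) \<le> h x" if "x \<in> space X" for x
    using Tr[OF that] by (auto simp: h_def)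
  have gun: "(\<lambda>x. gu (r x)) \<in> borel_measurable \<nu>" by (rule measurable_compose[OF rn gu])
  have gvn: "(\<lambda>x. gv (r x)) \<in> borel_measurable \<nu>" by (rule measurable_compose[OF rn gv])
  have iu: "integrable \<nu> (\<lambda>x. gu (r x))"
    by (rule int01[OF nu(1) gun, where c=1]) (use b rsp spn in auto)
  have iv: "integrable \<nu> (\<lambda>x. gv (r x))"
    by (rule int01[OF nu(1) gvn, where c=1]) (use b rsp spn in auto)
  have ih: "integrable \<nu> h"
    by (rule int01[OF nu(1) hmn, where c=1]) (use hb spn in auto)
  have "(\<integral>x. gu (r x) \<partial>\<nu>) - (\<integral>x. gv (r x) \<partial>\<nu>) = (\<integral>x. gu (r x) - gv (r x) \<partial>\<nu>)"
    by (rule Bochner_Integration.integral_diff[OF iu iv, symmetric])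
  also have "\<dots> \<le> (\<integral>x. h x \<partial>\<nu>)"
    by (rule integral_mono[OF Bochner_Integration.integrable_diff[OF iu iv] ih]) (use hge spn in auto)
  also have "\<dots> \<le> M * (\<integral>x. h x \<partial>\<pi>2)"
    by (rule dominate[OF nu(1) p2(1) _ _ hmp]) (use nu p2 dom hb spp in auto)
  also have "(\<integral>x. h x \<partial>\<pi>2) = (\<integral>x. indicator T (r x) * gu (r x) \<partial>\<pi>2) - (\<integral>x. indicator T (r x) * gv (r x) \<partial>\<pi>2)"
  proof -
    have m1: "(\<lambda>x. indicator T (r x) * gu (r x)) \<in> borel_measurable \<pi>2"
      by (intro borel_measurable_times measurable_compose[OF rp borel_measurable_indicator[OF T]] measurable_compose[OF rp gu])
    have m2: "(\<lambda>x. indicator T (r x) * gv (r x)) \<in> borel_measurable \<pi>2"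
      by (intro borel_measurable_times measurable_compose[OF rp borel_measurable_indicator[OF T]] measurable_compose[OF rp gv])
    have i1: "integrable \<pi>2 (\<lambda>x. indicator T (r x) * gu (r x))"
      by (rule int01[OF p2(1) m1, where c=1]) (use b rsp spp in \<open>auto simp: indicator_def\<close>)
    have i2: "integrable \<pi>2 (\<lambda>x. indicator T (r x) * gv (r x))"
      by (rule int01[OF p2(1) m2, where c=1]) (use b rsp spp in \<open>auto simp: indicator_def\<close>)
    have "(\<integral>x. h x \<partial>\<pi>2) = (\<integral>x. indicator T (r x) * gu (r x) - indicator T (r x) * gv (r x) \<partial>\<pi>2)"
      unfolding h_def by (simp add: right_diff_distrib)
    also have "\<dots> = (\<integral>x. indicator T (r x) * gu (r x) \<partial>\<pi>2) - (\<integral>x. indicator T (r x) * gv (r x) \<partial>\<pi>2)"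
      by (rule Bochner_Integration.integral_diff[OF i1 i2])
    finally show ?thesis .
  qed
  also have "M * \<dots> \<le> M * c" by (rule mult_left_mono[OF L[OF T] M0])
  finally show ?thesis .
qed



lemma key_step:
  assumes i: "i < K"
    and p1: "prob_space \<pi>1" "sets \<pi>1 = sets (prodX K Ms)"
    and p2: "prob_space \<pi>2" "sets \<pi>2 = sets (prodX K Ms)"
    and c1: "is_cond_dist K Ms \<pi>1 i Q1" and c2: "is_cond_dist K Ms \<pi>2 i Q2"
    and nu: "\<nu> \<in> Nset K Ms \<pi>2 M"
  shows "tv_dist (bind \<nu> (gibbs_step K Ms i Q1)) (bind \<nu> (gibbs_step K Ms i Q2)) \<le> 2 * M * tv_dist \<pi>1 \<pi>2"
proof -
  let ?I = "{..<K} - {i}"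
  let ?Y = "PiM ?I Ms"
  let ?X = "prodX K Ms"
  have Q1m: "Q1 \<in> ?Y \<rightarrow>\<^sub>M prob_algebra (Ms i)" using c1 unfolding is_cond_dist_def by auto
  have Q2m: "Q2 \<in> ?Y \<rightarrow>\<^sub>M prob_algebra (Ms i)" using c2 unfolding is_cond_dist_def by auto
  have Am: "gibbs_step K Ms i Q1 \<in> ?X \<rightarrow>\<^sub>M prob_algebra ?X" by (rule step_meas[OF i Q1m])
  have Bm: "gibbs_step K Ms i Q2 \<in> ?X \<rightarrow>\<^sub>M prob_algebra ?X" by (rule step_meas[OF i Q2m])
  have nup: "prob_space \<nu>" "sets \<nu> = sets ?X" and dom: "\<forall>A\<in>sets ?X. measure \<nu> A \<le> M * measure \<pi>2 A"
    using nu unfolding Nset_def by auto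
  have sX1: "space \<pi>1 = space ?X" using p1(2) by (rule sets_eq_imp_space_eq)
  have sX2: "space \<pi>2 = space ?X" using p2(2) by (rule sets_eq_imp_space_eq)
  have sXn: "space \<nu> = space ?X" using nup(2) by (rule sets_eq_imp_space_eq)
  have tvs: "tv_dist \<pi>2 \<pi>1 = tv_dist \<pi>1 \<pi>2" by (rule tv_sym) (simp add: p1 p2)
  have rm: "(\<lambda>x. restrict x ?I) \<in> ?X \<rightarrow>\<^sub>M ?Y" by (rule measurable_restrict_subset) auto
  have rsp: "restrict x ?I \<in> space ?Y" if "x \<in> space ?X" for x using measurable_space[OF rm that] .
  have nuS: "\<nu> \<in> space (prob_algebra ?X)" using nup by (simp add: pa_iff)
  show ?thesis
  proof (rule tv_least)
    fix E assume "E \<in> sets (bind \<nu> (gibbs_step K Ms i Q1))"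
    then have E: "E \<in> sets ?X" using sets_bind'[OF nuS Am] by simp
    define f1 where "f1 z = measure (kap K Ms i Q1 z) E" for z
    define f2 where "f2 z = measure (kap K Ms i Q2 z) E" for z
    have f1m: "f1 \<in> borel_measurable ?Y" unfolding f1_def[abs_def]
      by (rule measurable_compose[OF kap_meas[OF i Q1m] measurable_measure_prob_algebra[OF E]])
    have f2m: "f2 \<in> borel_measurable ?Y" unfolding f2_def[abs_def]
      by (rule measurable_compose[OF kap_meas[OF i Q2m] measurable_measure_prob_algebra[OF E]])
    have fb: "0 \<le> f1 z \<and> f1 z \<le> 1 \<and> 0 \<le> f2 z \<and> f2 z \<le> 1" if "z \<in> space ?Y" for z
      using measurable_space[OF kap_meas[OF i Q1m] that] measurable_space[OF kap_meas[OF i Q2m] that]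
      by (auto simp: f1_def f2_def pa_iff intro: prob_space.prob_le_1)
    have g1: "measure (gibbs_step K Ms i Q1 x) E = f1 (restrict x ?I)" if "x \<in> space ?X" for x
      unfolding f1_def gibbs_step_kap[OF that i] ..
    have g2: "measure (gibbs_step K Ms i Q2 x) E = f2 (restrict x ?I)" if "x \<in> space ?X" for x
      unfolding f2_def gibbs_step_kap[OF that i] ..
    have eA: "measure (bind \<nu> (gibbs_step K Ms i Q1)) E = (\<integral>x. f1 (restrict x ?I) \<partial>\<nu>)"
      unfolding measure_bind_pa[OF nup Am E] by (rule Bochner_Integration.integral_cong) (use g1 sXn in auto)
    have eB: "measure (bind \<nu> (gibbs_step K Ms i Q2)) E = (\<integral>x. f2 (restrict x ?I) \<partial>\<nu>)"
      unfolding measure_bind_pa[OF nup Bm E] by (rule Bochner_Integration.integral_cong) (use g2 sXn in auto)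
    have L: "\<bar>(\<integral>x. indicator T (restrict x ?I) * f1 (restrict x ?I) \<partial>\<pi>2)
            - (\<integral>x. indicator T (restrict x ?I) * f2 (restrict x ?I) \<partial>\<pi>2)\<bar> \<le> 2 * tv_dist \<pi>1 \<pi>2"
      if T: "T \<in> sets ?Y" for T
    proof -
      define \<phi> where "\<phi> x = indicator T (restrict x ?I) * f1 (restrict x ?I)" for x
      have \<phi>m: "\<phi> \<in> borel_measurable ?X" unfolding \<phi>_def
        by (intro borel_measurable_times measurable_compose[OF rm borel_measurable_indicator[OF T]]
            measurable_compose[OF rm f1m])
      have \<phi>m1: "\<phi> \<in> borel_measurable \<pi>1" using \<phi>m unfolding measurable_cong_sets[OF p1(2) refl] .
      have \<phi>m2: "\<phi> \<in> borel_measurable \<pi>2" using \<phi>m unfolding measurable_cong_sets[OF p2(2) refl] .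
      have \<phi>b: "0 \<le> \<phi> x \<and> \<phi> x \<le> 1" if "x \<in> space ?X" for x
        using fb[OF rsp[OF that]] by (auto simp: \<phi>_def indicator_def)
      have d1: "(\<integral>x. \<phi> x \<partial>\<pi>2) - (\<integral>x. \<phi> x \<partial>\<pi>1) \<le> tv_dist \<pi>2 \<pi>1"
        by (rule tv_integral[OF p2(1) p1(1) _ \<phi>m2]) (use p1 p2 \<phi>b sX2 in auto)
      have d2: "(\<integral>x. \<phi> x \<partial>\<pi>1) - (\<integral>x. \<phi> x \<partial>\<pi>2) \<le> tv_dist \<pi>1 \<pi>2"
        by (rule tv_integral[OF p1(1) p2(1) _ \<phi>m1]) (use p1 p2 \<phi>b sX1 in auto)
      define S where "S = {x \<in> space ?X. restrict x ?I \<in> T \<and> x \<in> E}"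
      have S: "S \<in> sets ?X"
      proof -
        have "S = ((\<lambda>x. restrict x ?I) -` T \<inter> space ?X) \<inter> E"
          unfolding S_def using sets.sets_into_space[OF E] by blast
        also have "\<dots> \<in> sets ?X" by (intro sets.Int measurable_sets[OF rm T] E)
        finally show ?thesis .
      qed
      have e1: "(\<integral>x. \<phi> x \<partial>\<pi>1) = measure \<pi>1 S"
      proof -
        have "(\<integral>x. \<phi> x \<partial>\<pi>1) = (\<integral>x. indicator T (restrict x ?I) * measure (gibbs_step K Ms i Q1 x) E \<partial>\<pi>1)"
          by (rule Bochner_Integration.integral_cong) (use g1 sX1 in \<open>auto simp: \<phi>_def\<close>)
        also have "\<dots> = measure \<pi>1 {x \<in> space \<pi>1. restrict x ?I \<in> T \<and> x \<in> E}"
          by (rule disint_real[OF p1 c1 i T E])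
        finally show ?thesis unfolding S_def sX1 .
      qed
      have e2: "(\<integral>x. indicator T (restrict x ?I) * f2 (restrict x ?I) \<partial>\<pi>2) = measure \<pi>2 S"
      proof -
        have "(\<integral>x. indicator T (restrict x ?I) * f2 (restrict x ?I) \<partial>\<pi>2) = (\<integral>x. indicator T (restrict x ?I) * measure (gibbs_step K Ms i Q2 x) E \<partial>\<pi>2)"
          by (rule Bochner_Integration.integral_cong) (use g2 sX2 in auto)
        also have "\<dots> = measure \<pi>2 {x \<in> space \<pi>2. restrict x ?I \<in> T \<and> x \<in> E}"
          by (rule disint_real[OF p2 c2 i T E])
        finally show ?thesis unfolding S_def sX2 .
      qed
      have d3: "\<bar>measure \<pi>1 S - measure \<pi>2 S\<bar> \<le> tv_dist \<pi>1 \<pi>2"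
        by (rule tv_upper) (use p1 p2 S in auto)
      show ?thesis
        using d1 d2 d3 e1 e2 tvs unfolding \<phi>_def[symmetric] abs_le_iff by linarith
    qed
    have s1: "(\<integral>x. f1 (restrict x ?I) \<partial>\<nu>) - (\<integral>x. f2 (restrict x ?I) \<partial>\<nu>) \<le> M * (2 * tv_dist \<pi>1 \<pi>2)"
      by (rule side[OF nup p2 dom rm f1m f2m]) (use fb L in \<open>auto simp: abs_le_iff\<close>)
    have s2: "(\<integral>x. f2 (restrict x ?I) \<partial>\<nu>) - (\<integral>x. f1 (restrict x ?I) \<partial>\<nu>) \<le> M * (2 * tv_dist \<pi>1 \<pi>2)"
      by (rule side[OF nup p2 dom rm f2m f1m]) (use fb L in \<open>auto simp: abs_le_iff\<close>)
    show "\<bar>measure (bind \<nu> (gibbs_step K Ms i Q1)) E - measure (bind \<nu> (gibbs_step K Ms i Q2)) E\<bar>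
        \<le> 2 * M * tv_dist \<pi>1 \<pi>2"
      unfolding eA eB using s1 s2 by (simp add: abs_le_iff)
  qed
qed

lemma nset_step:
  assumes i: "i < K"
    and p2: "prob_space \<pi>2" "sets \<pi>2 = sets (prodX K Ms)"
    and c2: "is_cond_dist K Ms \<pi>2 i Q2"
    and nu: "\<nu> \<in> Nset K Ms \<pi>2 M"
  shows "bind \<nu> (gibbs_step K Ms i Q2) \<in> Nset K Ms \<pi>2 M"
proof -
  let ?I = "{..<K} - {i}"
  let ?Y = "PiM ?I Ms"
  let ?X = "prodX K Ms"
  have Q2m: "Q2 \<in> ?Y \<rightarrow>\<^sub>M prob_algebra (Ms i)" using c2 unfolding is_cond_dist_def by auto
  have Bm: "gibbs_step K Ms i Q2 \<in> ?X \<rightarrow>\<^sub>M prob_algebra ?X" by (rule step_meas[OF i Q2m])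
  have nup: "prob_space \<nu>" "sets \<nu> = sets ?X" and dom: "\<forall>A\<in>sets ?X. measure \<nu> A \<le> M * measure \<pi>2 A"
    using nu unfolding Nset_def by auto
  have sX2: "space \<pi>2 = space ?X" using p2(2) by (rule sets_eq_imp_space_eq)
  have nuS: "\<nu> \<in> space (prob_algebra ?X)" using nup by (simp add: pa_iff)
  have bS: "bind \<nu> (gibbs_step K Ms i Q2) \<in> space (prob_algebra ?X)" by (rule bind_pa[OF nuS Bm])
  have rm: "(\<lambda>x. restrict x ?I) \<in> ?X \<rightarrow>\<^sub>M ?Y" by (rule measurable_restrict_subset) auto
  have rsp: "restrict x ?I \<in> space ?Y" if "x \<in> space ?X" for x using measurable_space[OF rm that] .
  have "measure (bind \<nu> (gibbs_step K Ms i Q2)) A \<le> M * measure \<pi>2 A" if A: "A \<in> sets ?X" for A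
  proof -
    have hm: "(\<lambda>x. measure (gibbs_step K Ms i Q2 x) A) \<in> borel_measurable ?X"
      by (rule measurable_compose[OF Bm measurable_measure_prob_algebra[OF A]])
    have hm2: "(\<lambda>x. measure (gibbs_step K Ms i Q2 x) A) \<in> borel_measurable \<pi>2"
      using hm unfolding measurable_cong_sets[OF p2(2) refl] .
    have hb: "0 \<le> measure (gibbs_step K Ms i Q2 x) A \<and> measure (gibbs_step K Ms i Q2 x) A \<le> 1" if "x \<in> space ?X" for x
      using measurable_space[OF Bm that] by (auto simp: pa_iff intro: prob_space.prob_le_1)
    have "measure (bind \<nu> (gibbs_step K Ms i Q2)) A = (\<integral>x. measure (gibbs_step K Ms i Q2 x) A \<partial>\<nu>)"
      by (rule measure_bind_pa[OF nup Bm A])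
    also have "\<dots> \<le> M * (\<integral>x. measure (gibbs_step K Ms i Q2 x) A \<partial>\<pi>2)"
      by (rule dominate[OF nup(1) p2(1) _ _ hm2]) (use nup p2 dom hb sX2 in auto)
    also have "(\<integral>x. measure (gibbs_step K Ms i Q2 x) A \<partial>\<pi>2)
        = (\<integral>x. indicator (space ?Y) (restrict x ?I) * measure (gibbs_step K Ms i Q2 x) A \<partial>\<pi>2)"
      by (rule Bochner_Integration.integral_cong) (use rsp sX2 in auto)
    also have "\<dots> = measure \<pi>2 {x \<in> space \<pi>2. restrict x ?I \<in> space ?Y \<and> x \<in> A}"
      by (rule disint_real[OF p2 c2 i sets.top A])
    also have "{x \<in> space \<pi>2. restrict x ?I \<in> space ?Y \<and> x \<in> A} = A"
      using rsp sX2 sets.sets_into_space[OF A] by auto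
    finally show ?thesis .
  qed
  then show ?thesis using bS unfolding Nset_def by (auto simp: pa_iff)
qed



lemma tv_tri:
  assumes "prob_space a" "prob_space b" "prob_space c" "sets b = sets a" "sets c = sets a"
  shows "tv_dist a c \<le> tv_dist a b + tv_dist b c"
proof (rule tv_least)
  fix A assume A: "A \<in> sets a"
  have "\<bar>measure a A - measure b A\<bar> \<le> tv_dist a b" by (rule tv_upper) (use assms A in auto)
  moreover have "\<bar>measure b A - measure c A\<bar> \<le> tv_dist b c" by (rule tv_upper) (use assms A in auto)
  ultimately show "\<bar>measure a A - measure c A\<bar> \<le> tv_dist a b + tv_dist b c"
    unfolding abs_le_iff by linarith
qed

lemma tv_self: "tv_dist a a \<le> 0"
  by (rule tv_least) simp

lemma runk_ret_meas:
  assumes "\<forall>j\<in>set js. C j \<in> N \<rightarrow>\<^sub>M prob_algebra N"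
  shows "(\<lambda>x. runk C js (return N x)) \<in> N \<rightarrow>\<^sub>M prob_algebra N"
  using assms
proof (induction js rule: rev_induct)
  case Nil
  have "return N \<in> N \<rightarrow>\<^sub>M prob_algebra N"
    by (rule measurable_prob_algebraI[OF prob_space_return return_measurable])
  then show ?case by simp
next
  case (snoc j js)
  have "(\<lambda>x. bind (runk C js (return N x)) (C j)) \<in> N \<rightarrow>\<^sub>M prob_algebra N"
    by (rule measurable_bind_prob_space) (use snoc in auto)
  then show ?case by (simp add: runk_append)
qed

lemma bind_runk:
  assumes mu: "sets \<mu> = sets N" and C: "\<forall>j\<in>set js. C j \<in> N \<rightarrow>\<^sub>M prob_algebra N"
  shows "bind \<mu> (\<lambda>x. runk C js (return N x)) = runk C js \<mu>"
  using C
proof (induction js rule: rev_induct)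
  case Nil then show ?case by (simp add: bind_return''[OF mu])
next
  case (snoc j js)
  have m1: "(\<lambda>x. runk C js (return N x)) \<in> N \<rightarrow>\<^sub>M subprob_algebra N"
    by (rule measurable_prob_algebraD[OF runk_ret_meas]) (use snoc.prems in auto)
  have m1': "(\<lambda>x. runk C js (return N x)) \<in> \<mu> \<rightarrow>\<^sub>M subprob_algebra N"
    using m1 unfolding measurable_cong_sets[OF mu refl] .
  have m2: "C j \<in> N \<rightarrow>\<^sub>M subprob_algebra N"
    by (rule measurable_prob_algebraD) (use snoc.prems in auto)
  have "bind \<mu> (\<lambda>x. runk C (js @ [j]) (return N x)) = bind \<mu> (\<lambda>x. bind (runk C js (return N x)) (C j))"
    by (simp only: runk_append)
  also have "\<dots> = bind (bind \<mu> (\<lambda>x. runk C js (return N x))) (C j)"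
    by (rule bind_assoc[OF m1' m2, symmetric])
  also have "\<dots> = bind (runk C js \<mu>) (C j)" using snoc by simp
  finally show ?case by (simp only: runk_append)
qed

lemma kernel_runk:
  assumes c: "\<forall>i<K. is_cond_dist K Ms \<pi> i (Q i)" and mu: "sets \<mu> = sets (prodX K Ms)"
  shows "apply_kernel \<mu> (gibbs_kernel K Ms Q) = runk (\<lambda>j. gibbs_step K Ms j (Q j)) [0..<K] \<mu>"
    and "\<forall>j\<in>set [0..<K]. gibbs_step K Ms j (Q j) \<in> prodX K Ms \<rightarrow>\<^sub>M prob_algebra (prodX K Ms)"
proof -
  show C: "\<forall>j\<in>set [0..<K]. gibbs_step K Ms j (Q j) \<in> prodX K Ms \<rightarrow>\<^sub>M prob_algebra (prodX K Ms)"
  proof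
    fix j assume "j \<in> set [0..<K]"
    then have j: "j < K" by simp
    show "gibbs_step K Ms j (Q j) \<in> prodX K Ms \<rightarrow>\<^sub>M prob_algebra (prodX K Ms)"
      by (rule step_meas[OF j]) (use c j in \<open>auto simp: is_cond_dist_def\<close>)
  qed
  have "apply_kernel \<mu> (gibbs_kernel K Ms Q) = bind \<mu> (\<lambda>x. runk (\<lambda>j. gibbs_step K Ms j (Q j)) [0..<K] (return (prodX K Ms) x))"
    unfolding apply_kernel_def gibbs_kernel_def gibbs_iter_runk ..
  also have "\<dots> = runk (\<lambda>j. gibbs_step K Ms j (Q j)) [0..<K] \<mu>"
    by (rule bind_runk[OF mu C])
  finally show "apply_kernel \<mu> (gibbs_kernel K Ms Q) = runk (\<lambda>j. gibbs_step K Ms j (Q j)) [0..<K] \<mu>" .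
qed

lemma nset_pa: "\<nu> \<in> Nset K Ms \<pi> M \<Longrightarrow> \<nu> \<in> space (prob_algebra (prodX K Ms))"
  unfolding Nset_def by (simp add: pa_iff)

lemma main_dir:
  assumes p1: "prob_space \<pi>1" "sets \<pi>1 = sets (prodX K Ms)"
    and p2: "prob_space \<pi>2" "sets \<pi>2 = sets (prodX K Ms)"
    and c1: "\<forall>i<K. is_cond_dist K Ms \<pi>1 i (Q1 i)"
    and c2: "\<forall>i<K. is_cond_dist K Ms \<pi>2 i (Q2 i)"
    and mu: "\<mu> \<in> Nset K Ms \<pi>2 M"
  shows "tv_dist (apply_kernel \<mu> (gibbs_kernel K Ms Q1)) (apply_kernel \<mu> (gibbs_kernel K Ms Q2))
           \<le> 2 * M * real K * tv_dist \<pi>1 \<pi>2"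
proof -
  let ?X = "prodX K Ms"
  define C1 where "C1 = (\<lambda>j. gibbs_step K Ms j (Q1 j))"
  define C2 where "C2 = (\<lambda>j. gibbs_step K Ms j (Q2 j))"
  have muS: "\<mu> \<in> space (prob_algebra ?X)" by (rule nset_pa[OF mu])
  have mus: "sets \<mu> = sets ?X" using muS by (simp add: pa_iff)
  note k1 = kernel_runk[OF c1 mus, folded C1_def]
  note k2 = kernel_runk[OF c2 mus, folded C2_def]
  have C1m: "C1 j \<in> ?X \<rightarrow>\<^sub>M prob_algebra ?X" if "j < K" for j using k1(2) that by (simp add: C1_def)
  have C2m: "C2 j \<in> ?X \<rightarrow>\<^sub>M prob_algebra ?X" if "j < K" for j using k2(2) that by (simp add: C2_def)
  define nu where "nu k = runk C2 [0..<k] \<mu>" for k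
  define H where "H k = runk C1 [k..<K] (nu k)" for k
  have nuS: "nu (Suc k) = bind (nu k) (C2 k)" for k unfolding nu_def by (simp add: runk_append)
  have nuN: "nu k \<in> Nset K Ms \<pi>2 M" if "k \<le> K" for k
    using that
  proof (induction k)
    case 0 then show ?case using mu by (simp add: nu_def)
  next
    case (Suc k)
    have "bind (nu k) (C2 k) \<in> Nset K Ms \<pi>2 M"
      unfolding C2_def by (rule nset_step[OF _ p2]) (use Suc c2 in auto)
    then show ?case by (simp add: nuS)
  qed
  have C1s: "\<forall>j\<in>set [a..<K]. C1 j \<in> ?X \<rightarrow>\<^sub>M prob_algebra ?X" for a using C1m by auto
  have HS: "H k \<in> space (prob_algebra ?X)" if "k \<le> K" for k
    unfolding H_def by (rule runk_pa[OF nset_pa[OF nuN[OF that]] C1s])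
  have HP: "prob_space (H k)" "sets (H k) = sets ?X" if "k \<le> K" for k using HS[OF that] by (auto simp: pa_iff)
  have step: "tv_dist (H k) (H (Suc k)) \<le> 2 * M * tv_dist \<pi>1 \<pi>2" if k: "k < K" for k
  proof -
    have e1: "H k = runk C1 [Suc k..<K] (bind (nu k) (C1 k))"
      unfolding H_def using k by (simp add: upt_conv_Cons)
    have e2: "H (Suc k) = runk C1 [Suc k..<K] (bind (nu k) (C2 k))"
      unfolding H_def nuS ..
    have nk: "nu k \<in> Nset K Ms \<pi>2 M" using nuN k by simp
    have "tv_dist (H k) (H (Suc k)) \<le> tv_dist (bind (nu k) (C1 k)) (bind (nu k) (C2 k))"
      unfolding e1 e2
      by (rule tv_runk[OF bind_pa[OF nset_pa[OF nk] C1m[OF k]] bind_pa[OF nset_pa[OF nk] C2m[OF k]] C1s])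
    also have "\<dots> \<le> 2 * M * tv_dist \<pi>1 \<pi>2"
      unfolding C1_def C2_def by (rule key_step[OF k p1 p2 _ _ nk]) (use c1 c2 k in auto)
    finally show ?thesis .
  qed
  have acc: "tv_dist (H 0) (H n) \<le> real n * (2 * M * tv_dist \<pi>1 \<pi>2)" if "n \<le> K" for n
    using that
  proof (induction n)
    case 0 then show ?case using tv_self[of "H 0"] by simp
  next
    case (Suc n)
    have "tv_dist (H 0) (H (Suc n)) \<le> tv_dist (H 0) (H n) + tv_dist (H n) (H (Suc n))"
      by (rule tv_tri) (use HP Suc.prems in auto)
    also have "\<dots> \<le> real n * (2 * M * tv_dist \<pi>1 \<pi>2) + 2 * M * tv_dist \<pi>1 \<pi>2"
      using Suc step by (intro add_mono) auto
    finally show ?case by (simp add: algebra_simps)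
  qed
  have H0: "H 0 = apply_kernel \<mu> (gibbs_kernel K Ms Q1)" unfolding H_def nu_def k1(1) by simp
  have HK: "H K = apply_kernel \<mu> (gibbs_kernel K Ms Q2)" unfolding H_def nu_def k2(1) by simp
  show ?thesis using acc[of K] unfolding H0 HK by (simp add: algebra_simps)
qed

theorem proposition2p2:
  fixes K :: nat and Ms :: "nat \<Rightarrow> 'a measure"
    and \<pi>1 \<pi>2 \<mu> :: "(nat \<Rightarrow> 'a) measure"
    and Q1 Q2 :: "nat \<Rightarrow> (nat \<Rightarrow> 'a) \<Rightarrow> 'a measure"
    and M :: real
  assumes "prob_space \<pi>1" and "sets \<pi>1 = sets (prodX K Ms)"
    and "prob_space \<pi>2" and "sets \<pi>2 = sets (prodX K Ms)"
    and "\<forall>i<K. is_cond_dist K Ms \<pi>1 i (Q1 i)"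
    and "\<forall>i<K. is_cond_dist K Ms \<pi>2 i (Q2 i)"
    and "M \<ge> 1"
    and "\<mu> \<in> Nset K Ms \<pi>1 M \<union> Nset K Ms \<pi>2 M"
  shows "tv_dist (apply_kernel \<mu> (gibbs_kernel K Ms Q1)) (apply_kernel \<mu> (gibbs_kernel K Ms Q2))
           \<le> 2 * M * real K * tv_dist \<pi>1 \<pi>2"
proof (cases "\<mu> \<in> Nset K Ms \<pi>2 M")
  case True
  then show ?thesis by (rule main_dir[OF assms(1-6)])
next
  case False
  then have mu: "\<mu> \<in> Nset K Ms \<pi>1 M" using assms(8) by simp
  have mus: "sets \<mu> = sets (prodX K Ms)" using nset_pa[OF mu] by (simp add: pa_iff)
  have d: "tv_dist (apply_kernel \<mu> (gibbs_kernel K Ms Q2)) (apply_kernel \<mu> (gibbs_kernel K Ms Q1))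
           \<le> 2 * M * real K * tv_dist \<pi>2 \<pi>1"
    by (rule main_dir[OF assms(3,4,1,2,6,5) mu])
  have s1: "sets (apply_kernel \<mu> (gibbs_kernel K Ms Q1)) = sets (prodX K Ms)"
    unfolding kernel_runk(1)[OF assms(5) mus]
    using runk_pa[OF nset_pa[OF mu] kernel_runk(2)[OF assms(5) mus]] by (simp add: pa_iff)
  have s2: "sets (apply_kernel \<mu> (gibbs_kernel K Ms Q2)) = sets (prodX K Ms)"
    unfolding kernel_runk(1)[OF assms(6) mus]
    using runk_pa[OF nset_pa[OF mu] kernel_runk(2)[OF assms(6) mus]] by (simp add: pa_iff)
  have "tv_dist (apply_kernel \<mu> (gibbs_kernel K Ms Q1)) (apply_kernel \<mu> (gibbs_kernel K Ms Q2))
      = tv_dist (apply_kernel \<mu> (gibbs_kernel K Ms Q2)) (apply_kernel \<mu> (gibbs_kernel K Ms Q1))"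
    by (rule tv_sym) (simp add: s1 s2)
  moreover have "tv_dist \<pi>2 \<pi>1 = tv_dist \<pi>1 \<pi>2" by (rule tv_sym) (simp add: assms(2,4))
  ultimately show ?thesis using d by simp
qed


end
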